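(* For $\alpha,\beta\in\mathbb{R}$, let $\mathfrak{z}$ be the center of $\mathfrak{g}(\alpha,\beta)$. The $10$-dimensional quotient Lie algebra $\mathfrak{g}(\alpha,\beta)/\mathfrak{z}$ is characteristically nilpotent if and only if $(\alpha,\beta)\neq(0,0)$.
   Context: For $\alpha,\beta\in\mathbb{R}$, $\mathfrak{g}(\alpha,\beta)$ is the $11$-dimensional real Lie algebra with basis $e_1,\dots,e_{11}$ whose nonzero brackets (up to skew-symmetry) are: $[e_1,e_i]=e_{i+1}$ for $2\le i\le 10$; $[e_2,e_3]=e_5+\alpha e_6$, $[e_2,e_4]=e_6+\alpha e_7$, $[e_2,e_5]=-e_7+(\alpha-\beta)e_8$, $[e_2,e_6]=-3e_8+(\alpha-2\beta)e_9$, $[e_2,e_7]=-2e_9-\tfrac14(5\alpha+7\beta)e_{10}+\tfrac1{16}(27\alpha^2+12\alpha\beta+\beta^2)e_{11}$, $[e_2,e_8]=2e_{10}-\tfrac14(23\alpha+\beta)e_{11}$, $[e_2,e_9]=-e_{11}$; $[e_3,e_4]=2e_7+\beta e_8$, $[e_3,e_5]=2e_8+\beta e_9$, $[e_3,e_6]=-e_9+\tfrac14(9\alpha-\beta)e_{10}-\tfrac1{16}(27\alpha^2+12\alpha\beta+\beta^2)e_{11}$, $[e_3,e_7]=-4e_{10}+\tfrac32(3\alpha-\beta)e_{11}$, $[e_3,e_8]=3e_{11}$; $[e_4,e_5]=3e_9-\tfrac14(9\alpha-5\beta)e_{10}+\tfrac1{16}(27\alpha^2+12\alpha\beta+\beta^2)e_{11}$,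 $[e_4,e_6]=3e_{10}-\tfrac14(9\alpha-5\beta)e_{11}$, $[e_4,e_7]=-7e_{11}$; $[e_5,e_6]=10e_{11}$; all other brackets $[e_i,e_j]$ with $i<j$ are zero. Its center is $\mathfrak{z}=\mathrm{span}\{e_{11}\}$. A Lie algebra is characteristically nilpotent if all its derivations are nilpotent. *)

theory Defs
  imports Complex_Main
begin

(* Finite-dimensional real algebras are given by structure constants w.r.t. a
   basis e_1,...,e_n (indices 1..n):  [e_i,e_j] = sum_k  c i j k * e_k.
   Linear endomorphisms are given by their matrices D (1-indexed):
   D e_j = sum_i D i j * e_i. *)

definition lc :: "(nat \<times> real) list \<Rightarrow> nat \<Rightarrow> real" where
  "lc xs k = sum_list (map (\<lambda>(m,c). if m = k then c else 0) xs)"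

definition gU :: "real \<Rightarrow> real \<Rightarrow> nat \<Rightarrow> nat \<Rightarrow> nat \<Rightarrow> real" where
  "gU a b i j =
    (if i = 1 \<and> 2 \<le> j \<and> j \<le> 10 then lc [(j+1, 1)]
     else if (i,j) = (2,3) then lc [(5,1),(6,a)]
     else if (i,j) = (2,4) then lc [(6,1),(7,a)]
     else if (i,j) = (2,5) then lc [(7,-1),(8,a-b)]
     else if (i,j) = (2,6) then lc [(8,-3),(9,a-2*b)]
     else if (i,j) = (2,7) then lc [(9,-2),(10,-(1/4)*(5*a+7*b)),
                                    (11,(1/16)*(27*a^2+12*a*b+b^2))]
     else if (i,j) = (2,8) then lc [(10,2),(11,-(1/4)*(23*a+b))]
     else if (i,j) = (2,9) then lc [(11,-1)]
     else if (i,j) = (3,4) then lc [(7,2),(8,b)]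
     else if (i,j) = (3,5) then lc [(8,2),(9,b)]
     else if (i,j) = (3,6) then lc [(9,-1),(10,(1/4)*(9*a-b)),
                                    (11,-(1/16)*(27*a^2+12*a*b+b^2))]
     else if (i,j) = (3,7) then lc [(10,-4),(11,(3/2)*(3*a-b))]
     else if (i,j) = (3,8) then lc [(11,3)]
     else if (i,j) = (4,5) then lc [(9,3),(10,-(1/4)*(9*a-5*b)),
                                    (11,(1/16)*(27*a^2+12*a*b+b^2))]
     else if (i,j) = (4,6) then lc [(10,3),(11,-(1/4)*(9*a-5*b))]
     else if (i,j) = (4,7) then lc [(11,-7)]
     else if (i,j) = (5,6) then lc [(11,10)]
     else lc [])"

definition gstr :: "real \<Rightarrow> real \<Rightarrow> nat \<Rightarrow> nat \<Rightarrow> nat \<Rightarrow> real" where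
  "gstr a b i j k =
    (if i < j then gU a b i j k else if j < i then - gU a b j i k else 0)"

(* Quotient of an n-dimensional algebra (basis e_1..e_n) by the (central) ideal
   span{e_n}: basis given by the images of e_1..e_(n-1); the bracket is the
   bracket of the algebra with the e_n-component dropped. *)
definition quot_last :: "(nat \<Rightarrow> nat \<Rightarrow> nat \<Rightarrow> real) \<Rightarrow> nat \<Rightarrow> nat \<Rightarrow> nat \<Rightarrow> nat \<Rightarrow> real" where
  "quot_last c n i j k = (if i < n \<and> j < n \<and> k < n then c i j k else 0)"

definition is_derivation :: "nat \<Rightarrow> (nat \<Rightarrow> nat \<Rightarrow> nat \<Rightarrow> real) \<Rightarrow> (nat \<Rightarrow> nat \<Rightarrow> real) \<Rightarrow> bool" where
  "is_derivation n c D \<longleftrightarrow>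
     (\<forall>i\<in>{1..n}. \<forall>j\<in>{1..n}. \<forall>k\<in>{1..n}.
        (\<Sum>l=1..n. c i j l * D k l)
        = (\<Sum>l=1..n. D l i * c l j k) + (\<Sum>l=1..n. D l j * c i l k))"

definition mmult :: "nat \<Rightarrow> (nat \<Rightarrow> nat \<Rightarrow> real) \<Rightarrow> (nat \<Rightarrow> nat \<Rightarrow> real) \<Rightarrow> nat \<Rightarrow> nat \<Rightarrow> real" where
  "mmult n A B i j = (\<Sum>l=1..n. A i l * B l j)"

primrec mpow :: "nat \<Rightarrow> (nat \<Rightarrow> nat \<Rightarrow> real) \<Rightarrow> nat \<Rightarrow> nat \<Rightarrow> nat \<Rightarrow> real" where
  "mpow n A 0 = (\<lambda>i j. if i = j then 1 else 0)"
| "mpow n A (Suc m) = mmult n A (mpow n A m)"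

definition nilpotent_map :: "nat \<Rightarrow> (nat \<Rightarrow> nat \<Rightarrow> real) \<Rightarrow> bool" where
  "nilpotent_map n D \<longleftrightarrow> (\<exists>m. \<forall>i\<in>{1..n}. \<forall>j\<in>{1..n}. mpow n D m i j = 0)"

definition char_nilpotent :: "nat \<Rightarrow> (nat \<Rightarrow> nat \<Rightarrow> nat \<Rightarrow> real) \<Rightarrow> bool" where
  "char_nilpotent n c \<longleftrightarrow> (\<forall>D. is_derivation n c D \<longrightarrow> nilpotent_map n D)"

end

theory Submission
  imports Defs
begin

lemma sum10: "(\<Sum>l::nat=1..10. f l) = f 1 + f 2 + f 3 + f 4 + f 5 + f 6 + f 7 + f 8 + f 9 + (f 10 :: real)"
  by (simp add: eval_nat_numeral atLeastAtMostSuc_conv)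

lemma set10: "{1..10::nat} = {1,2,3,4,5,6,7,8,9,10}"
  by (rule set_eqI) (simp, presburger)

lemma strict_lower:
  assumes der: "is_derivation 10 (quot_last (gstr a b) 11) D"
    and ab: "(a, b) \<noteq> (0, 0)"
  shows "\<forall>i\<in>{1..10}. \<forall>j\<in>{1..10}. i \<le> j \<longrightarrow> D i j = 0"
proof -
  have E: "\<And>i j k. i\<in>{1..10} \<Longrightarrow> j\<in>{1..10} \<Longrightarrow> k\<in>{1..10} \<Longrightarrow>
     (\<Sum>l=1..10. quot_last (gstr a b) 11 i j l * D k l)
        = (\<Sum>l=1..10. D l i * quot_last (gstr a b) 11 l j k) + (\<Sum>l=1..10. D l j * quot_last (gstr a b) 11 i l k)"
    using der unfolding is_derivation_def by blast
  have z_1_3: "D 1 3 = 0" using E[of 1 2 1, unfolded sum10]  by (simp add: quot_last_def gstr_def gU_def lc_def)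
  have z_2_3: "D 2 3 = 0" using E[of 1 2 2, unfolded sum10] z_1_3 by (simp add: quot_last_def gstr_def gU_def lc_def)
  have z_1_4: "D 1 4 = 0" using E[of 1 3 1, unfolded sum10] z_1_3 z_2_3 by (simp add: quot_last_def gstr_def gU_def lc_def)
  have z_2_4: "D 2 4 = 0" using E[of 1 3 2, unfolded sum10] z_1_3 z_2_3 z_1_4 by (simp add: quot_last_def gstr_def gU_def lc_def)
  have z_3_4: "D 3 4 = 0" using E[of 1 3 3, unfolded sum10] z_1_3 z_2_3 z_1_4 z_2_4 by (simp add: quot_last_def gstr_def gU_def lc_def)
  have z_1_5: "D 1 5 = 0" using E[of 1 4 1, unfolded sum10] z_1_3 z_2_3 z_1_4 z_2_4 z_3_4 by (simp add: quot_last_def gstr_def gU_def lc_def)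
  have z_2_5: "D 2 5 = 0" using E[of 1 4 2, unfolded sum10] z_1_3 z_2_3 z_1_4 z_2_4 z_3_4 z_1_5 by (simp add: quot_last_def gstr_def gU_def lc_def)
  have z_3_5: "D 3 5 = 0" using E[of 1 4 3, unfolded sum10] z_1_3 z_2_3 z_1_4 z_2_4 z_3_4 z_1_5 z_2_5 by (simp add: quot_last_def gstr_def gU_def lc_def)
  have z_4_5: "D 4 5 = 0" using E[of 1 4 4, unfolded sum10] z_1_3 z_2_3 z_1_4 z_2_4 z_3_4 z_1_5 z_2_5 z_3_5 by (simp add: quot_last_def gstr_def gU_def lc_def)
  have z_1_6: "D 1 6 = 0" using E[of 1 5 1, unfolded sum10] z_1_3 z_2_3 z_1_4 z_2_4 z_3_4 z_1_5 z_2_5 z_3_5 z_4_5 by (simp add: quot_last_def gstr_def gU_def lc_def)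
  have z_2_6: "D 2 6 = 0" using E[of 1 5 2, unfolded sum10] z_1_3 z_2_3 z_1_4 z_2_4 z_3_4 z_1_5 z_2_5 z_3_5 z_4_5 z_1_6 by (simp add: quot_last_def gstr_def gU_def lc_def)
  have z_3_6: "D 3 6 = 0" using E[of 1 5 3, unfolded sum10] z_1_3 z_2_3 z_1_4 z_2_4 z_3_4 z_1_5 z_2_5 z_3_5 z_4_5 z_1_6 z_2_6 by (simp add: quot_last_def gstr_def gU_def lc_def)
  have z_4_6: "D 4 6 = 0" using E[of 1 5 4, unfolded sum10] z_1_3 z_2_3 z_1_4 z_2_4 z_3_4 z_1_5 z_2_5 z_3_5 z_4_5 z_1_6 z_2_6 z_3_6 by (simp add: quot_last_def gstr_def gU_def lc_def)
  have z_5_6: "D 5 6 = 0" using E[of 1 5 5, unfolded sum10] z_1_3 z_2_3 z_1_4 z_2_4 z_3_4 z_1_5 z_2_5 z_3_5 z_4_5 z_1_6 z_2_6 z_3_6 z_4_6 by (simp add: quot_last_def gstr_def gU_def lc_def)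
  have z_1_7: "D 1 7 = 0" using E[of 1 6 1, unfolded sum10] z_1_3 z_2_3 z_1_4 z_2_4 z_3_4 z_1_5 z_2_5 z_3_5 z_4_5 z_1_6 z_2_6 z_3_6 z_4_6 z_5_6 by (simp add: quot_last_def gstr_def gU_def lc_def)
  have z_2_7: "D 2 7 = 0" using E[of 1 6 2, unfolded sum10] z_1_3 z_2_3 z_1_4 z_2_4 z_3_4 z_1_5 z_2_5 z_3_5 z_4_5 z_1_6 z_2_6 z_3_6 z_4_6 z_5_6 z_1_7 by (simp add: quot_last_def gstr_def gU_def lc_def)
  have z_3_7: "D 3 7 = 0" using E[of 1 6 3, unfolded sum10] z_1_3 z_2_3 z_1_4 z_2_4 z_3_4 z_1_5 z_2_5 z_3_5 z_4_5 z_1_6 z_2_6 z_3_6 z_4_6 z_5_6 z_1_7 z_2_7 by (simp add: quot_last_def gstr_def gU_def lc_def)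
  have z_4_7: "D 4 7 = 0" using E[of 1 6 4, unfolded sum10] z_1_3 z_2_3 z_1_4 z_2_4 z_3_4 z_1_5 z_2_5 z_3_5 z_4_5 z_1_6 z_2_6 z_3_6 z_4_6 z_5_6 z_1_7 z_2_7 z_3_7 by (simp add: quot_last_def gstr_def gU_def lc_def)
  have z_5_7: "D 5 7 = 0" using E[of 1 6 5, unfolded sum10] z_1_3 z_2_3 z_1_4 z_2_4 z_3_4 z_1_5 z_2_5 z_3_5 z_4_5 z_1_6 z_2_6 z_3_6 z_4_6 z_5_6 z_1_7 z_2_7 z_3_7 z_4_7 by (simp add: quot_last_def gstr_def gU_def lc_def)
  have z_6_7: "D 6 7 = 0" using E[of 1 6 6, unfolded sum10] z_1_3 z_2_3 z_1_4 z_2_4 z_3_4 z_1_5 z_2_5 z_3_5 z_4_5 z_1_6 z_2_6 z_3_6 z_4_6 z_5_6 z_1_7 z_2_7 z_3_7 z_4_7 z_5_7 by (simp add: quot_last_def gstr_def gU_def lc_def)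
  have z_1_8: "D 1 8 = 0" using E[of 1 7 1, unfolded sum10] z_1_3 z_2_3 z_1_4 z_2_4 z_3_4 z_1_5 z_2_5 z_3_5 z_4_5 z_1_6 z_2_6 z_3_6 z_4_6 z_5_6 z_1_7 z_2_7 z_3_7 z_4_7 z_5_7 z_6_7 by (simp add: quot_last_def gstr_def gU_def lc_def)
  have z_2_8: "D 2 8 = 0" using E[of 1 7 2, unfolded sum10] z_1_3 z_2_3 z_1_4 z_2_4 z_3_4 z_1_5 z_2_5 z_3_5 z_4_5 z_1_6 z_2_6 z_3_6 z_4_6 z_5_6 z_1_7 z_2_7 z_3_7 z_4_7 z_5_7 z_6_7 z_1_8 by (simp add: quot_last_def gstr_def gU_def lc_def)
  have z_3_8: "D 3 8 = 0" using E[of 1 7 3, unfolded sum10] z_1_3 z_2_3 z_1_4 z_2_4 z_3_4 z_1_5 z_2_5 z_3_5 z_4_5 z_1_6 z_2_6 z_3_6 z_4_6 z_5_6 z_1_7 z_2_7 z_3_7 z_4_7 z_5_7 z_6_7 z_1_8 z_2_8 by (simp add: quot_last_def gstr_def gU_def lc_def)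
  have z_4_8: "D 4 8 = 0" using E[of 1 7 4, unfolded sum10] z_1_3 z_2_3 z_1_4 z_2_4 z_3_4 z_1_5 z_2_5 z_3_5 z_4_5 z_1_6 z_2_6 z_3_6 z_4_6 z_5_6 z_1_7 z_2_7 z_3_7 z_4_7 z_5_7 z_6_7 z_1_8 z_2_8 z_3_8 by (simp add: quot_last_def gstr_def gU_def lc_def)
  have z_5_8: "D 5 8 = 0" using E[of 1 7 5, unfolded sum10] z_1_3 z_2_3 z_1_4 z_2_4 z_3_4 z_1_5 z_2_5 z_3_5 z_4_5 z_1_6 z_2_6 z_3_6 z_4_6 z_5_6 z_1_7 z_2_7 z_3_7 z_4_7 z_5_7 z_6_7 z_1_8 z_2_8 z_3_8 z_4_8 by (simp add: quot_last_def gstr_def gU_def lc_def)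
  have z_6_8: "D 6 8 = 0" using E[of 1 7 6, unfolded sum10] z_1_3 z_2_3 z_1_4 z_2_4 z_3_4 z_1_5 z_2_5 z_3_5 z_4_5 z_1_6 z_2_6 z_3_6 z_4_6 z_5_6 z_1_7 z_2_7 z_3_7 z_4_7 z_5_7 z_6_7 z_1_8 z_2_8 z_3_8 z_4_8 z_5_8 by (simp add: quot_last_def gstr_def gU_def lc_def)
  have z_7_8: "D 7 8 = 0" using E[of 1 7 7, unfolded sum10] z_1_3 z_2_3 z_1_4 z_2_4 z_3_4 z_1_5 z_2_5 z_3_5 z_4_5 z_1_6 z_2_6 z_3_6 z_4_6 z_5_6 z_1_7 z_2_7 z_3_7 z_4_7 z_5_7 z_6_7 z_1_8 z_2_8 z_3_8 z_4_8 z_5_8 z_6_8 by (simp add: quot_last_def gstr_def gU_def lc_def)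
  have z_1_9: "D 1 9 = 0" using E[of 1 8 1, unfolded sum10] z_1_3 z_2_3 z_1_4 z_2_4 z_3_4 z_1_5 z_2_5 z_3_5 z_4_5 z_1_6 z_2_6 z_3_6 z_4_6 z_5_6 z_1_7 z_2_7 z_3_7 z_4_7 z_5_7 z_6_7 z_1_8 z_2_8 z_3_8 z_4_8 z_5_8 z_6_8 z_7_8 by (simp add: quot_last_def gstr_def gU_def lc_def)
  have z_2_9: "D 2 9 = 0" using E[of 1 8 2, unfolded sum10] z_1_3 z_2_3 z_1_4 z_2_4 z_3_4 z_1_5 z_2_5 z_3_5 z_4_5 z_1_6 z_2_6 z_3_6 z_4_6 z_5_6 z_1_7 z_2_7 z_3_7 z_4_7 z_5_7 z_6_7 z_1_8 z_2_8 z_3_8 z_4_8 z_5_8 z_6_8 z_7_8 z_1_9 by (simp add: quot_last_def gstr_def gU_def lc_def)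
  have z_3_9: "D 3 9 = 0" using E[of 1 8 3, unfolded sum10] z_1_3 z_2_3 z_1_4 z_2_4 z_3_4 z_1_5 z_2_5 z_3_5 z_4_5 z_1_6 z_2_6 z_3_6 z_4_6 z_5_6 z_1_7 z_2_7 z_3_7 z_4_7 z_5_7 z_6_7 z_1_8 z_2_8 z_3_8 z_4_8 z_5_8 z_6_8 z_7_8 z_1_9 z_2_9 by (simp add: quot_last_def gstr_def gU_def lc_def)
  have z_4_9: "D 4 9 = 0" using E[of 1 8 4, unfolded sum10] z_1_3 z_2_3 z_1_4 z_2_4 z_3_4 z_1_5 z_2_5 z_3_5 z_4_5 z_1_6 z_2_6 z_3_6 z_4_6 z_5_6 z_1_7 z_2_7 z_3_7 z_4_7 z_5_7 z_6_7 z_1_8 z_2_8 z_3_8 z_4_8 z_5_8 z_6_8 z_7_8 z_1_9 z_2_9 z_3_9 by (simp add: quot_last_def gstr_def gU_def lc_def)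
  have z_5_9: "D 5 9 = 0" using E[of 1 8 5, unfolded sum10] z_1_3 z_2_3 z_1_4 z_2_4 z_3_4 z_1_5 z_2_5 z_3_5 z_4_5 z_1_6 z_2_6 z_3_6 z_4_6 z_5_6 z_1_7 z_2_7 z_3_7 z_4_7 z_5_7 z_6_7 z_1_8 z_2_8 z_3_8 z_4_8 z_5_8 z_6_8 z_7_8 z_1_9 z_2_9 z_3_9 z_4_9 by (simp add: quot_last_def gstr_def gU_def lc_def)
  have z_6_9: "D 6 9 = 0" using E[of 1 8 6, unfolded sum10] z_1_3 z_2_3 z_1_4 z_2_4 z_3_4 z_1_5 z_2_5 z_3_5 z_4_5 z_1_6 z_2_6 z_3_6 z_4_6 z_5_6 z_1_7 z_2_7 z_3_7 z_4_7 z_5_7 z_6_7 z_1_8 z_2_8 z_3_8 z_4_8 z_5_8 z_6_8 z_7_8 z_1_9 z_2_9 z_3_9 z_4_9 z_5_9 by (simp add: quot_last_def gstr_def gU_def lc_def)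
  have z_7_9: "D 7 9 = 0" using E[of 1 8 7, unfolded sum10] z_1_3 z_2_3 z_1_4 z_2_4 z_3_4 z_1_5 z_2_5 z_3_5 z_4_5 z_1_6 z_2_6 z_3_6 z_4_6 z_5_6 z_1_7 z_2_7 z_3_7 z_4_7 z_5_7 z_6_7 z_1_8 z_2_8 z_3_8 z_4_8 z_5_8 z_6_8 z_7_8 z_1_9 z_2_9 z_3_9 z_4_9 z_5_9 z_6_9 by (simp add: quot_last_def gstr_def gU_def lc_def)
  have z_8_9: "D 8 9 = 0" using E[of 1 8 8, unfolded sum10] z_1_3 z_2_3 z_1_4 z_2_4 z_3_4 z_1_5 z_2_5 z_3_5 z_4_5 z_1_6 z_2_6 z_3_6 z_4_6 z_5_6 z_1_7 z_2_7 z_3_7 z_4_7 z_5_7 z_6_7 z_1_8 z_2_8 z_3_8 z_4_8 z_5_8 z_6_8 z_7_8 z_1_9 z_2_9 z_3_9 z_4_9 z_5_9 z_6_9 z_7_9 by (simp add: quot_last_def gstr_def gU_def lc_def)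
  have z_1_10: "D 1 10 = 0" using E[of 1 9 1, unfolded sum10] z_1_3 z_2_3 z_1_4 z_2_4 z_3_4 z_1_5 z_2_5 z_3_5 z_4_5 z_1_6 z_2_6 z_3_6 z_4_6 z_5_6 z_1_7 z_2_7 z_3_7 z_4_7 z_5_7 z_6_7 z_1_8 z_2_8 z_3_8 z_4_8 z_5_8 z_6_8 z_7_8 z_1_9 z_2_9 z_3_9 z_4_9 z_5_9 z_6_9 z_7_9 z_8_9 by (simp add: quot_last_def gstr_def gU_def lc_def)
  have z_2_10: "D 2 10 = 0" using E[of 1 9 2, unfolded sum10] z_1_3 z_2_3 z_1_4 z_2_4 z_3_4 z_1_5 z_2_5 z_3_5 z_4_5 z_1_6 z_2_6 z_3_6 z_4_6 z_5_6 z_1_7 z_2_7 z_3_7 z_4_7 z_5_7 z_6_7 z_1_8 z_2_8 z_3_8 z_4_8 z_5_8 z_6_8 z_7_8 z_1_9 z_2_9 z_3_9 z_4_9 z_5_9 z_6_9 z_7_9 z_8_9 z_1_10 by (simp add: quot_last_def gstr_def gU_def lc_def)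
  have z_3_10: "D 3 10 = 0" using E[of 1 9 3, unfolded sum10] z_1_3 z_2_3 z_1_4 z_2_4 z_3_4 z_1_5 z_2_5 z_3_5 z_4_5 z_1_6 z_2_6 z_3_6 z_4_6 z_5_6 z_1_7 z_2_7 z_3_7 z_4_7 z_5_7 z_6_7 z_1_8 z_2_8 z_3_8 z_4_8 z_5_8 z_6_8 z_7_8 z_1_9 z_2_9 z_3_9 z_4_9 z_5_9 z_6_9 z_7_9 z_8_9 z_1_10 z_2_10 by (simp add: quot_last_def gstr_def gU_def lc_def)
  have z_4_10: "D 4 10 = 0" using E[of 1 9 4, unfolded sum10] z_1_3 z_2_3 z_1_4 z_2_4 z_3_4 z_1_5 z_2_5 z_3_5 z_4_5 z_1_6 z_2_6 z_3_6 z_4_6 z_5_6 z_1_7 z_2_7 z_3_7 z_4_7 z_5_7 z_6_7 z_1_8 z_2_8 z_3_8 z_4_8 z_5_8 z_6_8 z_7_8 z_1_9 z_2_9 z_3_9 z_4_9 z_5_9 z_6_9 z_7_9 z_8_9 z_1_10 z_2_10 z_3_10 by (simp add: quot_last_def gstr_def gU_def lc_def)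
  have z_5_10: "D 5 10 = 0" using E[of 1 9 5, unfolded sum10] z_1_3 z_2_3 z_1_4 z_2_4 z_3_4 z_1_5 z_2_5 z_3_5 z_4_5 z_1_6 z_2_6 z_3_6 z_4_6 z_5_6 z_1_7 z_2_7 z_3_7 z_4_7 z_5_7 z_6_7 z_1_8 z_2_8 z_3_8 z_4_8 z_5_8 z_6_8 z_7_8 z_1_9 z_2_9 z_3_9 z_4_9 z_5_9 z_6_9 z_7_9 z_8_9 z_1_10 z_2_10 z_3_10 z_4_10 by (simp add: quot_last_def gstr_def gU_def lc_def)
  have z_6_10: "D 6 10 = 0" using E[of 1 9 6, unfolded sum10] z_1_3 z_2_3 z_1_4 z_2_4 z_3_4 z_1_5 z_2_5 z_3_5 z_4_5 z_1_6 z_2_6 z_3_6 z_4_6 z_5_6 z_1_7 z_2_7 z_3_7 z_4_7 z_5_7 z_6_7 z_1_8 z_2_8 z_3_8 z_4_8 z_5_8 z_6_8 z_7_8 z_1_9 z_2_9 z_3_9 z_4_9 z_5_9 z_6_9 z_7_9 z_8_9 z_1_10 z_2_10 z_3_10 z_4_10 z_5_10 by (simp add: quot_last_def gstr_def gU_def lc_def)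
  have z_7_10: "D 7 10 = 0" using E[of 1 9 7, unfolded sum10] z_1_3 z_2_3 z_1_4 z_2_4 z_3_4 z_1_5 z_2_5 z_3_5 z_4_5 z_1_6 z_2_6 z_3_6 z_4_6 z_5_6 z_1_7 z_2_7 z_3_7 z_4_7 z_5_7 z_6_7 z_1_8 z_2_8 z_3_8 z_4_8 z_5_8 z_6_8 z_7_8 z_1_9 z_2_9 z_3_9 z_4_9 z_5_9 z_6_9 z_7_9 z_8_9 z_1_10 z_2_10 z_3_10 z_4_10 z_5_10 z_6_10 by (simp add: quot_last_def gstr_def gU_def lc_def)
  have z_8_10: "D 8 10 = 0" using E[of 1 9 8, unfolded sum10] z_1_3 z_2_3 z_1_4 z_2_4 z_3_4 z_1_5 z_2_5 z_3_5 z_4_5 z_1_6 z_2_6 z_3_6 z_4_6 z_5_6 z_1_7 z_2_7 z_3_7 z_4_7 z_5_7 z_6_7 z_1_8 z_2_8 z_3_8 z_4_8 z_5_8 z_6_8 z_7_8 z_1_9 z_2_9 z_3_9 z_4_9 z_5_9 z_6_9 z_7_9 z_8_9 z_1_10 z_2_10 z_3_10 z_4_10 z_5_10 z_6_10 z_7_10 by (simp add: quot_last_def gstr_def gU_def lc_def)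
  have z_9_10: "D 9 10 = 0" using E[of 1 9 9, unfolded sum10] z_1_3 z_2_3 z_1_4 z_2_4 z_3_4 z_1_5 z_2_5 z_3_5 z_4_5 z_1_6 z_2_6 z_3_6 z_4_6 z_5_6 z_1_7 z_2_7 z_3_7 z_4_7 z_5_7 z_6_7 z_1_8 z_2_8 z_3_8 z_4_8 z_5_8 z_6_8 z_7_8 z_1_9 z_2_9 z_3_9 z_4_9 z_5_9 z_6_9 z_7_9 z_8_9 z_1_10 z_2_10 z_3_10 z_4_10 z_5_10 z_6_10 z_7_10 z_8_10 by (simp add: quot_last_def gstr_def gU_def lc_def)
  have z_1_2: "D 1 2 = 0" using E[of 2 3 4, unfolded sum10] z_1_3 z_2_3 z_1_4 z_2_4 z_3_4 z_1_5 z_2_5 z_3_5 z_4_5 z_1_6 z_2_6 z_3_6 z_4_6 z_5_6 z_1_7 z_2_7 z_3_7 z_4_7 z_5_7 z_6_7 z_1_8 z_2_8 z_3_8 z_4_8 z_5_8 z_6_8 z_7_8 z_1_9 z_2_9 z_3_9 z_4_9 z_5_9 z_6_9 z_7_9 z_8_9 z_1_10 z_2_10 z_3_10 z_4_10 z_5_10 z_6_10 z_7_10 z_8_10 z_9_10 by (simp add: quot_last_def gstr_def gU_def lc_def)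
  note zs = z_1_3 z_2_3 z_1_4 z_2_4 z_3_4 z_1_5 z_2_5 z_3_5 z_4_5 z_1_6 z_2_6 z_3_6 z_4_6 z_5_6 z_1_7 z_2_7 z_3_7 z_4_7 z_5_7 z_6_7 z_1_8 z_2_8 z_3_8 z_4_8 z_5_8 z_6_8 z_7_8 z_1_9 z_2_9 z_3_9 z_4_9 z_5_9 z_6_9 z_7_9 z_8_9 z_1_10 z_2_10 z_3_10 z_4_10 z_5_10 z_6_10 z_7_10 z_8_10 z_9_10 z_1_2
  have q_1_2_3: "D 3 3 = D 1 1 + D 2 2" using E[of 1 2 3, unfolded sum10] zs by (simp add: quot_last_def gstr_def gU_def lc_def)
  have q_1_3_4: "D 4 4 = D 1 1 + D 3 3" using E[of 1 3 4, unfolded sum10] zs by (simp add: quot_last_def gstr_def gU_def lc_def)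
  have q_1_4_5: "D 5 5 = D 1 1 + D 4 4" using E[of 1 4 5, unfolded sum10] zs by (simp add: quot_last_def gstr_def gU_def lc_def)
  have q_1_5_6: "D 6 6 = D 1 1 + D 5 5" using E[of 1 5 6, unfolded sum10] zs by (simp add: quot_last_def gstr_def gU_def lc_def)
  have q_1_6_7: "D 7 7 = D 1 1 + D 6 6" using E[of 1 6 7, unfolded sum10] zs by (simp add: quot_last_def gstr_def gU_def lc_def)
  have q_1_7_8: "D 8 8 = D 1 1 + D 7 7" using E[of 1 7 8, unfolded sum10] zs by (simp add: quot_last_def gstr_def gU_def lc_def)
  have q_1_8_9: "D 9 9 = D 1 1 + D 8 8" using E[of 1 8 9, unfolded sum10] zs by (simp add: quot_last_def gstr_def gU_def lc_def)
  have q_1_9_10: "D 10 10 = D 1 1 + D 9 9" using E[of 1 9 10, unfolded sum10] zs by (simp add: quot_last_def gstr_def gU_def lc_def)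
  have q_2_3_5: "D 5 5 = D 2 2 + D 3 3" using E[of 2 3 5, unfolded sum10] zs by (simp add: quot_last_def gstr_def gU_def lc_def)
  have dg_2: "D 2 2 = 2 * D 1 1" using q_1_2_3 q_1_3_4 q_1_4_5 q_1_5_6 q_1_6_7 q_1_7_8 q_1_8_9 q_1_9_10 q_2_3_5 by linarith
  have dg_3: "D 3 3 = 3 * D 1 1" using q_1_2_3 q_1_3_4 q_1_4_5 q_1_5_6 q_1_6_7 q_1_7_8 q_1_8_9 q_1_9_10 q_2_3_5 by linarith
  have dg_4: "D 4 4 = 4 * D 1 1" using q_1_2_3 q_1_3_4 q_1_4_5 q_1_5_6 q_1_6_7 q_1_7_8 q_1_8_9 q_1_9_10 q_2_3_5 by linarith
  have dg_5: "D 5 5 = 5 * D 1 1" using q_1_2_3 q_1_3_4 q_1_4_5 q_1_5_6 q_1_6_7 q_1_7_8 q_1_8_9 q_1_9_10 q_2_3_5 by linarith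
  have dg_6: "D 6 6 = 6 * D 1 1" using q_1_2_3 q_1_3_4 q_1_4_5 q_1_5_6 q_1_6_7 q_1_7_8 q_1_8_9 q_1_9_10 q_2_3_5 by linarith
  have dg_7: "D 7 7 = 7 * D 1 1" using q_1_2_3 q_1_3_4 q_1_4_5 q_1_5_6 q_1_6_7 q_1_7_8 q_1_8_9 q_1_9_10 q_2_3_5 by linarith
  have dg_8: "D 8 8 = 8 * D 1 1" using q_1_2_3 q_1_3_4 q_1_4_5 q_1_5_6 q_1_6_7 q_1_7_8 q_1_8_9 q_1_9_10 q_2_3_5 by linarith
  have dg_9: "D 9 9 = 9 * D 1 1" using q_1_2_3 q_1_3_4 q_1_4_5 q_1_5_6 q_1_6_7 q_1_7_8 q_1_8_9 q_1_9_10 q_2_3_5 by linarith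
  have dg_10: "D 10 10 = 10 * D 1 1" using q_1_2_3 q_1_3_4 q_1_4_5 q_1_5_6 q_1_6_7 q_1_7_8 q_1_8_9 q_1_9_10 q_2_3_5 by linarith
  note dgs = dg_2 dg_3 dg_4 dg_5 dg_6 dg_7 dg_8 dg_9 dg_10
  have r_1_2_5: "((1))*D 3 1 + ((-1))*D 4 2 + ((1))*D 5 3 = 0" using E[of 1 2 5, unfolded sum10] zs dgs by (simp add: quot_last_def gstr_def gU_def lc_def algebra_simps)
  have r_1_3_5: "((-1))*D 2 1 + ((-1))*D 4 3 + ((1))*D 5 4 = 0" using E[of 1 3 5, unfolded sum10] zs dgs by (simp add: quot_last_def gstr_def gU_def lc_def algebra_simps)
  have r_1_3_6: "((-1)*a)*D 2 1 + ((-1))*D 5 3 + ((1))*D 6 4 = 0" using E[of 1 3 6, unfolded sum10] zs dgs by (simp add: quot_last_def gstr_def gU_def lc_def algebra_simps)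
  have r_1_4_6: "((-1))*D 2 1 + ((-1))*D 5 4 + ((1))*D 6 5 = 0" using E[of 1 4 6, unfolded sum10] zs dgs by (simp add: quot_last_def gstr_def gU_def lc_def algebra_simps)
  have r_1_4_7: "((-1)*a)*D 2 1 + ((-2))*D 3 1 + ((-1))*D 6 4 + ((1))*D 7 5 = 0" using E[of 1 4 7, unfolded sum10] zs dgs by (simp add: quot_last_def gstr_def gU_def lc_def algebra_simps)
  have r_1_5_7: "((1))*D 2 1 + ((-1))*D 6 5 + ((1))*D 7 6 = 0" using E[of 1 5 7, unfolded sum10] zs dgs by (simp add: quot_last_def gstr_def gU_def lc_def algebra_simps)
  have r_1_5_8: "((1)*b + (-1)*a)*D 2 1 + ((-2))*D 3 1 + ((-1))*D 7 5 + ((1))*D 8 6 = 0" using E[of 1 5 8, unfolded sum10] zs dgs by (simp add: quot_last_def gstr_def gU_def lc_def algebra_simps)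
  have r_1_6_8: "((3))*D 2 1 + ((-1))*D 7 6 + ((1))*D 8 7 = 0" using E[of 1 6 8, unfolded sum10] zs dgs by (simp add: quot_last_def gstr_def gU_def lc_def algebra_simps)
  have r_1_6_9: "((2)*b + (-1)*a)*D 2 1 + ((1))*D 3 1 + ((-1))*D 8 6 + ((1))*D 9 7 = 0" using E[of 1 6 9, unfolded sum10] zs dgs by (simp add: quot_last_def gstr_def gU_def lc_def algebra_simps)
  have r_1_7_9: "((2))*D 2 1 + ((-1))*D 8 7 + ((1))*D 9 8 = 0" using E[of 1 7 9, unfolded sum10] zs dgs by (simp add: quot_last_def gstr_def gU_def lc_def algebra_simps)
  have r_2_3_6: "((1)*a)*D 1 1 + ((-1))*D 4 3 + ((1))*D 6 5 = 0" using E[of 2 3 6, unfolded sum10] zs dgs by (simp add: quot_last_def gstr_def gU_def lc_def algebra_simps)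
  have r_2_3_7: "((2))*D 4 2 + ((-1)*a)*D 4 3 + ((1))*D 5 3 + ((1))*D 7 5 + ((1)*a)*D 7 6 = 0" using E[of 2 3 7, unfolded sum10] zs dgs by (simp add: quot_last_def gstr_def gU_def lc_def algebra_simps)
  have r_3_4_8: "((1)*b)*D 1 1 + ((-2))*D 5 4 + ((2))*D 8 7 = 0" using E[of 3 4 8, unfolded sum10] zs dgs by (simp add: quot_last_def gstr_def gU_def lc_def algebra_simps)
  have r_3_4_9: "((3))*D 5 3 + ((-1)*b)*D 5 4 + ((1))*D 6 4 + ((2))*D 9 7 + ((1)*b)*D 9 8 = 0" using E[of 3 4 9, unfolded sum10] zs dgs by (simp add: quot_last_def gstr_def gU_def lc_def algebra_simps)
  have L1: "((1)*b + (3)*a)*D 1 1 = 0"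
  proof -
    have "((1)*b + (3)*a)*D 1 1 = ((1))*(((1)*b)*D 1 1 + ((-2))*D 5 4 + ((2))*D 8 7) + ((-2))*(((3))*D 2 1 + ((-1))*D 7 6 + ((1))*D 8 7) + ((-3))*(((-1))*D 2 1 + ((-1))*D 4 3 + ((1))*D 5 4) + ((-2))*(((1))*D 2 1 + ((-1))*D 6 5 + ((1))*D 7 6) + ((-5))*(((-1))*D 2 1 + ((-1))*D 5 4 + ((1))*D 6 5) + ((3))*(((1)*a)*D 1 1 + ((-1))*D 4 3 + ((1))*D 6 5)" by (simp add: algebra_simps)
    also have "... = 0" unfolding r_3_4_8 r_1_6_8 r_1_3_5 r_1_5_7 r_1_4_6 r_2_3_6 by simp
    finally show ?thesis .
  qed
  have L2: "((11/2)*a*b + (-9/4)*a*a)*D 1 1 = 0"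
  proof -
    have "((11/2)*a*b + (-9/4)*a*a)*D 1 1 = ((1))*(((3))*D 5 3 + ((-1)*b)*D 5 4 + ((1))*D 6 4 + ((2))*D 9 7 + ((1)*b)*D 9 8) + ((-3))*(((1))*D 3 1 + ((-1))*D 4 2 + ((1))*D 5 3) + ((-3/2))*(((-1)*a)*D 2 1 + ((-1))*D 5 3 + ((1))*D 6 4) + ((-11/2)*b + (15/4)*a)*(((-1))*D 2 1 + ((-1))*D 4 3 + ((1))*D 5 4) + ((-1/2))*(((-1)*a)*D 2 1 + ((-2))*D 3 1 + ((-1))*D 6 4 + ((1))*D 7 5) + ((-2))*(((2)*b + (-1)*a)*D 2 1 + ((1))*D 3 1 + ((-1))*D 8 6 + ((1))*D 9 7) + ((-2))*(((1)*b + (-1)*a)*D 2 1 + ((-2))*D 3 1 + ((-1))*D 7 5 + ((1))*D 8 6) + ((-1)*b)*(((2))*D 2 1 + ((-1))*D 8 7 + ((1))*D 9 8) + ((-1)*b)*(((3))*D 2 1 + ((-1))*D 7 6 + ((1))*D 8 7) + ((-1)*b + (3/2)*a)*(((1))*D 2 1 + ((-1))*D 6 5 + ((1))*D 7 6) + ((-13/2)*b + (15/4)*a)*(((-1))*D 2 1 + ((-1))*D 5 4 + ((1))*D 6 5) + ((11/2)*b + (-9/4)*a)*(((1)*a)*D 1 1 + ((-1))*D 4 3 + ((1))*D 6 5) + ((-3/2))*(((2))*D 4 2 + ((-1)*a)*D 4 3 + ((1))*D 5 3 + ((1))*D 7 5 + ((1)*a)*D 7 6)" by (simp add: algebra_s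imps)
    also have "... = 0" unfolding r_3_4_9 r_1_2_5 r_1_3_6 r_1_3_5 r_1_4_7 r_1_6_9 r_1_5_8 r_1_7_9 r_1_6_8 r_1_5_7 r_1_4_6 r_2_3_6 r_2_3_7 by simp
    finally show ?thesis .
  qed
  have d0: "D 1 1 = 0"
  proof (rule ccontr)
    assume "D 1 1 \<noteq> 0"
    then have h1: "b + 3*a = 0" and h2: "(11/2)*a*b + (-9/4)*a*a = 0" using L1 L2 by auto
    then have "b = -3*a" by linarith
    with h2 have "a*a = 0" by (simp add: algebra_simps)
    then have "a = 0" by simp
    with \<open>b = -3*a\<close> ab show False by simp
  qed
  show ?thesis unfolding set10 using zs dgs d0 by simp
qed


lemma lower_pow:
  assumes L: "\<forall>i\<in>{1..n}. \<forall>j\<in>{1..n}. i \<le> j \<longrightarrow> D i j = 0"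
  shows "\<forall>i\<in>{1..n}. \<forall>j\<in>{1..n}. i < j + m \<longrightarrow> mpow n D m i j = 0"
proof (induction m)
  case 0
  then show ?case by auto
next
  case (Suc m)
  show ?case
  proof (intro ballI impI)
    fix i j assume i: "i \<in> {1..n}" and j: "j \<in> {1..n}" and ij: "i < j + Suc m"
    have "mpow n D (Suc m) i j = (\<Sum>l=1..n. D i l * mpow n D m l j)"
      by (simp add: mmult_def)
    also have "\<dots> = 0"
    proof (rule sum.neutral, rule ballI)
      fix l assume l: "l \<in> {1..n}"
      show "D i l * mpow n D m l j = 0"
      proof (cases "i \<le> l")
        case True then show ?thesis using L i l by simp
      next
        case False
        then have "l < j + m" using ij by simp
        then show ?thesis using Suc.IH l j by simp
      qed
    qed
    finally show "mpow n D (Suc m) i j = 0" .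
  qed
qed

lemma lower_nil:
  assumes L: "\<forall>i\<in>{1..n}. \<forall>j\<in>{1..n}. i \<le> j \<longrightarrow> D i j = 0"
  shows "nilpotent_map n D"
  unfolding nilpotent_map_def
proof (rule exI[of _ n], intro ballI)
  fix i j assume i: "i \<in> {1..n}" and j: "j \<in> {1..n}"
  then have "i < j + n" by simp
  then show "mpow n D n i j = 0" using lower_pow[OF L] i j by blast
qed

lemma gU00: "gU 0 0 i j k \<noteq> 0 \<Longrightarrow> k = i + j"
  unfolding gU_def lc_def by (simp split: if_splits)

lemma c00: "quot_last (gstr 0 0) 11 i j k \<noteq> 0 \<Longrightarrow> k = i + j"
  unfolding quot_last_def gstr_def using gU00[of i j k] gU00[of j i k]
  by (auto split: if_splits)

lemma sum_delta_r: "k \<in> {1..n::nat} \<Longrightarrow> (\<Sum>l=1..n. f l * (if k = l then x else 0)) = f k * (x::real)"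
proof -
  assume k: "k \<in> {1..n}"
  have "(\<Sum>l=1..n. f l * (if k = l then x else 0)) = (\<Sum>l=1..n. if k = l then f l * x else 0)"
    by (rule sum.cong) auto
  also have "\<dots> = f k * x" using k by (subst sum.delta') auto
  finally show ?thesis .
qed

lemma sum_delta_l: "k \<in> {1..n::nat} \<Longrightarrow> (\<Sum>l=1..n. (if l = k then g l else 0) * f l) = g k * (f k :: real)"
proof -
  assume k: "k \<in> {1..n}"
  have "(\<Sum>l=1..n. (if l = k then g l else 0) * f l) = (\<Sum>l=1..n. if k = l then g l * f l else 0)"
    by (rule sum.cong) auto
  also have "\<dots> = g k * f k" using k by (subst sum.delta') auto
  finally show ?thesis .
qed

definition Dg :: "nat \<Rightarrow> nat \<Rightarrow> real" where
  "Dg i j = (if i = j then real i else 0)"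

lemma Dg_der: "is_derivation 10 (quot_last (gstr 0 0) 11) Dg"
  unfolding is_derivation_def
proof (intro ballI)
  fix i j k :: nat
  assume i: "i \<in> {1..10}" and j: "j \<in> {1..10}" and k: "k \<in> {1..10}"
  let ?c = "quot_last (gstr 0 0) 11"
  have s1: "(\<Sum>l=1..10. ?c i j l * Dg k l) = ?c i j k * real k"
    unfolding Dg_def using sum_delta_r[OF k, of "?c i j"] by simp
  have s2: "(\<Sum>l=1..10. Dg l i * ?c l j k) = real i * ?c i j k"
    unfolding Dg_def using sum_delta_l[OF i, of real "\<lambda>l. ?c l j k"] by simp
  have s3: "(\<Sum>l=1..10. Dg l j * ?c i l k) = real j * ?c i j k"
    unfolding Dg_def using sum_delta_l[OF j, of real "\<lambda>l. ?c i l k"] by simp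
  have "?c i j k * real k = real i * ?c i j k + real j * ?c i j k"
  proof (cases "?c i j k = 0")
    case True then show ?thesis by simp
  next
    case False then have "k = i + j" by (rule c00)
    then show ?thesis by (simp add: algebra_simps)
  qed
  then show "(\<Sum>l=1..10. ?c i j l * Dg k l) = (\<Sum>l=1..10. Dg l i * ?c l j k) + (\<Sum>l=1..10. Dg l j * ?c i l k)"
    using s1 s2 s3 by simp
qed

lemma Dg_pow: "i \<in> {1..n} \<Longrightarrow> mpow n Dg m i i = real i ^ m"
proof (induction m)
  case 0 then show ?case by simp
next
  case (Suc m)
  have "mpow n Dg (Suc m) i i = (\<Sum>l=1..n. Dg i l * mpow n Dg m l i)"
    by (simp add: mmult_def)
  also have "\<dots> = (\<Sum>l=1..n. if i = l then real i * mpow n Dg m i i else 0)"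
    by (rule sum.cong) (auto simp: Dg_def)
  also have "\<dots> = real i * mpow n Dg m i i" using Suc.prems by (simp add: sum.delta sum.delta')
  finally show ?case using Suc by simp
qed

lemma Dg_not_nil: "\<not> nilpotent_map 10 Dg"
proof
  assume "nilpotent_map 10 Dg"
  then obtain m where "\<forall>i\<in>{1..10}. \<forall>j\<in>{1..10}. mpow 10 Dg m i j = 0"
    unfolding nilpotent_map_def by blast
  then have "mpow 10 Dg m 1 1 = 0" by simp
  moreover have "mpow 10 Dg m 1 1 = 1" using Dg_pow[of 1 10 m] by simp
  ultimately show False by simp
qed

theorem proposition4p4:
  fixes \<alpha> \<beta> :: real
  shows "char_nilpotent 10 (quot_last (gstr \<alpha> \<beta>) 11) \<longleftrightarrow> (\<alpha>, \<beta>) \<noteq> (0, 0)"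
proof
  assume cn: "char_nilpotent 10 (quot_last (gstr \<alpha> \<beta>) 11)"
  show "(\<alpha>, \<beta>) \<noteq> (0, 0)"
  proof
    assume "(\<alpha>, \<beta>) = (0, 0)"
    then have "\<alpha> = 0" "\<beta> = 0" by auto
    then show False using cn Dg_der Dg_not_nil unfolding char_nilpotent_def by auto
  qed
next
  assume "(\<alpha>, \<beta>) \<noteq> (0, 0)"
  then show "char_nilpotent 10 (quot_last (gstr \<alpha> \<beta>) 11)"
    unfolding char_nilpotent_def using strict_lower lower_nil by blast
qed

end
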